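(* For the discrete series representations $\omega_{\ell,\pm}$ ($\ell>1/2$), the localisation of the Dirac operator $D$ has zero kernel. For a principal series representation $\pi_{q,\tau}$ ($q\ge1/4$, $0\le\tau\le1$), the localisation of $D$ at $\pi_{q,\tau}$ (acting on $V_{q,\tau}\oplus V_{q,\tau}$) has nonzero kernel if and only if $(q,\tau)$ lies on the parabolic arc \[ \mathcal{Q}=\{(q,\tau): q+2\tau(\tau-1)=0,\ \tau\in[1/2-1/\sqrt8,\ 1/2+1/\sqrt8]\}. \] At each $(q,\tau)\in\mathcal{Q}$ the kernel (the Dirac cohomology localised at $\pi_{q,\tau}$) is one-dimensional, spanned by the 2-spinor \[ \sqrt{1-\tau}\begin{pmatrix} f_\tau\\ 0\end{pmatrix}-\sqrt{\tau}\begin{pmatrix} 0\\ f_{\tau-1}\end{pmatrix}. \]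
   Context: $G$ is the universal cover of $\mathrm{SL}_2(\mathbb{R})$, $\mathfrak{A}=C^*_r(G)$, $X_0,X_1,X_2$ an orthonormal basis of $\mathfrak{sl}_2(\mathbb{R})$ acting on functions on $G$ as right-invariant vector fields. The Dirac operator is $D=i\begin{pmatrix}X_0& X_1+iX_2\\ X_1-iX_2& -X_0\end{pmatrix}$, an unbounded operator on the Hilbert $\mathfrak{A}$-module $\mathfrak{A}\oplus\mathfrak{A}$. The localisation of $D$ at a representation $(V,\pi)$ in the reduced dual is $D\otimes1$ on $(\mathfrak{A}\oplus\mathfrak{A})\otimes_{\mathfrak{A}}V\cong V\oplus V$; it equals $-\mathbb{H}$, where, with $H_k$ defined by $\exp(-itH_k)=\pi(\exp(tX_k))$ and $H_\pm=H_1\pm iH_2$, $\mathbb{H}=\begin{pmatrix}H_0&H_+\\H_-&-H_0\end{pmatrix}$. The principal series $\pi_{q,\tau}$ on $V_{q,\tau}$ ($q\ge1/4$, $0\le\tau\le1$, Casimir value $q$) has orthonormal basis $f_m$, $m\in\tau+\mathbb{Z}$, with $H_0f_m=mf_m$, $H_+f_m=(q+m(m+1))^{1/2}f_{m+1}$, $H_-f_m=(q+m(m-1))^{1/2}f_{m-1}$. The discrete series $\omega_{\ell,+}$ (resp. $\omega_{\ell,-}$), $\ell>1/2$, with Casimir value $q=\ell(1-\ell)$, has orthonormal basis $f_m$, $m\in\{\ell,\ell+1,\dots\}$ (resp. $m\in\{-\ell,-\ell-1,\dots\}$), with the same formulas except $H_-f_\ell=0$ and $H_+f_{-\ell}=0$.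 *)

theory Defs
  imports "HOL-Analysis.Analysis"
begin

text \<open>A representation is modelled by its weight index set I (a subset of the reals)
  and Casimir value q. Vectors of V are coefficient functions x (x m = coefficient
  of the orthonormal basis vector f m), supported in I and square summable.\<close>

definition ladder_space :: "real set \<Rightarrow> (real \<Rightarrow> complex) set" where
  "ladder_space I = {x. (\<forall>m. m \<notin> I \<longrightarrow> x m = 0) \<and> (\<lambda>m. (cmod (x m))^2) summable_on I}"

definition basis_vec :: "real \<Rightarrow> real \<Rightarrow> complex" where
  "basis_vec m = (\<lambda>n. if n = m then 1 else 0)"

text \<open>H_+ f_m = Hplus_coef q I m * f_(m+1);  H_- f_m = Hminus_coef q I m * f_(m-1)
  (zero when the target index is not a weight).\<close>
definition Hplus_coef :: "real \<Rightarrow> real set \<Rightarrow> real \<Rightarrow> real" where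
  "Hplus_coef q I m = (if m \<in> I \<and> m + 1 \<in> I then sqrt (q + m * (m + 1)) else 0)"

definition Hminus_coef :: "real \<Rightarrow> real set \<Rightarrow> real \<Rightarrow> real" where
  "Hminus_coef q I m = (if m \<in> I \<and> m - 1 \<in> I then sqrt (q + m * (m - 1)) else 0)"

definition H0_op :: "(real \<Rightarrow> complex) \<Rightarrow> real \<Rightarrow> complex" where
  "H0_op x = (\<lambda>n. complex_of_real n * x n)"

definition Hplus_op :: "real \<Rightarrow> real set \<Rightarrow> (real \<Rightarrow> complex) \<Rightarrow> real \<Rightarrow> complex" where
  "Hplus_op q I x = (\<lambda>n. complex_of_real (Hplus_coef q I (n - 1)) * x (n - 1))"

definition Hminus_op :: "real \<Rightarrow> real set \<Rightarrow> (real \<Rightarrow> complex) \<Rightarrow> real \<Rightarrow> complex" where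
  "Hminus_op q I x = (\<lambda>n. complex_of_real (Hminus_coef q I (n + 1)) * x (n + 1))"

text \<open>The localised Dirac operator D (x) 1 = - \<bbbH> acting (formally) on V (+) V.\<close>
definition dirac_loc :: "real \<Rightarrow> real set \<Rightarrow> (real \<Rightarrow> complex) \<times> (real \<Rightarrow> complex)
    \<Rightarrow> (real \<Rightarrow> complex) \<times> (real \<Rightarrow> complex)" where
  "dirac_loc q I uv = (\<lambda>n. - (H0_op (fst uv) n + Hplus_op q I (snd uv) n),
                       \<lambda>n. - (Hminus_op q I (fst uv) n - H0_op (snd uv) n))"

definition dirac_kernel :: "real \<Rightarrow> real set \<Rightarrow> ((real \<Rightarrow> complex) \<times> (real \<Rightarrow> complex)) set" where
  "dirac_kernel q I = {uv. fst uv \<in> ladder_space I \<and> snd uv \<in> ladder_space I \<and>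
                           dirac_loc q I uv = (\<lambda>_. 0, \<lambda>_. 0)}"

definition principal_index :: "real \<Rightarrow> real set" where
  "principal_index \<tau> = {m. \<exists>k::int. m = \<tau> + of_int k}"

definition discrete_plus_index :: "real \<Rightarrow> real set" where
  "discrete_plus_index l = {m. \<exists>k::nat. m = l + of_nat k}"

definition discrete_minus_index :: "real \<Rightarrow> real set" where
  "discrete_minus_index l = {m. \<exists>k::nat. m = - l - of_nat k}"

definition arcQ :: "(real \<times> real) set" where
  "arcQ = {(q, \<tau>). q + 2 * \<tau> * (\<tau> - 1) = 0 \<and>
             1/2 - 1 / sqrt 8 \<le> \<tau> \<and> \<tau> \<le> 1/2 + 1 / sqrt 8}"

end

theory Submission
  imports Defs
begin

lemma alg2:
  fixes u v :: complex and n a d :: real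
  assumes e1: "of_real n * u + of_real a * v = 0"
    and e2: "of_real a * u - of_real (n-1) * v = 0"
    and dd: "a*a + n*(n-1) = d" and d0: "d \<noteq> 0"
  shows "u = 0 \<and> v = 0"
proof -
  have "of_real d * u = of_real (n-1) * (of_real n * u + of_real a * v)
        + of_real a * (of_real a * u - of_real (n-1) * v)"
    by (simp add: dd[symmetric] algebra_simps)
  then have 1: "of_real d * u = 0" using e1 e2 by simp
  have "of_real d * v = of_real a * (of_real n * u + of_real a * v)
        - of_real n * (of_real a * u - of_real (n-1) * v)"
    by (simp add: dd[symmetric] algebra_simps)
  then have 2: "of_real d * v = 0" using e1 e2 by simp
  show ?thesis using 1 2 d0 by simp
qed

lemma pt:
  assumes K: "(u,v) \<in> dirac_kernel q I"
  and c1: "n \<in> I \<Longrightarrow> n - 1 \<notin> I \<Longrightarrow> n \<noteq> 0"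
  and c2: "n \<notin> I \<Longrightarrow> n - 1 \<in> I \<Longrightarrow> n - 1 \<noteq> 0"
  and c3: "n \<in> I \<Longrightarrow> n - 1 \<in> I \<Longrightarrow> q + n*(n-1) \<ge> 0 \<and> q + 2*n*(n-1) \<noteq> 0"
  shows "u n = 0 \<and> v (n-1) = 0"
proof -
  from K have uI: "\<And>m. m \<notin> I \<Longrightarrow> u m = 0" and vI: "\<And>m. m \<notin> I \<Longrightarrow> v m = 0"
    and D: "dirac_loc q I (u,v) = (\<lambda>_. 0, \<lambda>_. 0)"
    by (auto simp: dirac_kernel_def ladder_space_def)
  have E1: "of_real n * u n + of_real (Hplus_coef q I (n-1)) * v (n-1) = 0"
    using fun_cong[OF arg_cong[where f=fst, OF D], of n]
    by (simp add: dirac_loc_def H0_op_def Hplus_op_def neg_eq_iff_add_eq_0)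
  have E2: "of_real (Hminus_coef q I n) * u n - of_real (n-1) * v (n-1) = 0"
    using fun_cong[OF arg_cong[where f=snd, OF D], of "n-1"]
    by (simp add: dirac_loc_def H0_op_def Hminus_op_def)
  show ?thesis
  proof (cases "n \<in> I")
    case True
    show ?thesis
    proof (cases "n - 1 \<in> I")
      case True2: True
      define a where "a = sqrt (q + n*(n-1))"
      from c3[OF True True2] have h: "q + n*(n-1) \<ge> 0" "q + 2*n*(n-1) \<noteq> 0" by auto
      have aa: "a * a = q + n*(n-1)" using h(1) unfolding a_def by simp
      have P: "Hplus_coef q I (n-1) = a" using True True2
        by (simp add: Hplus_coef_def a_def algebra_simps)
      have M: "Hminus_coef q I n = a" using True True2
        by (simp add: Hminus_coef_def a_def algebra_simps)
      show ?thesis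
        by (rule alg2[OF E1[unfolded P] E2[unfolded M], of "q + 2*n*(n-1)"])
           (use aa h in auto)
    next
      case False
      then have "v (n-1) = 0" using vI by blast
      then show ?thesis using E1 c1[OF True False] by simp
    qed
  next
    case False
    then have u0: "u n = 0" using uI by blast
    show ?thesis
    proof (cases "n - 1 \<in> I")
      case True
      then show ?thesis using E2 u0 c2[OF False True] by simp
    next
      case False2: False
      then show ?thesis using u0 vI by blast
    qed
  qed
qed

lemma zero_in: "(\<lambda>_. 0, \<lambda>_. 0) \<in> dirac_kernel q I"
  by (simp add: dirac_kernel_def ladder_space_def dirac_loc_def H0_op_def Hplus_op_def Hminus_op_def)

lemma kernel_zero:
  assumes c1: "\<And>n. n \<in> I \<Longrightarrow> n - 1 \<notin> I \<Longrightarrow> n \<noteq> 0"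
  and c2: "\<And>n. n \<notin> I \<Longrightarrow> n - 1 \<in> I \<Longrightarrow> n - 1 \<noteq> 0"
  and c3: "\<And>n. n \<in> I \<Longrightarrow> n - 1 \<in> I \<Longrightarrow> q + n*(n-1) \<ge> 0 \<and> q + 2*n*(n-1) \<noteq> 0"
  shows "dirac_kernel q I = {(\<lambda>_. 0, \<lambda>_. 0)}"
proof
  show "dirac_kernel q I \<subseteq> {(\<lambda>_. 0, \<lambda>_. 0)}"
  proof
    fix uv assume K: "uv \<in> dirac_kernel q I"
    obtain u v where uv: "uv = (u,v)" by fastforce
    have p: "\<And>n. u n = 0 \<and> v (n-1) = 0"
      using pt[OF K[unfolded uv]] c1 c2 c3 by blast
    have "u = (\<lambda>_. 0)" using p by auto
    moreover have "v = (\<lambda>_. 0)"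
    proof
      fix m show "v m = 0" using p[of "m+1"] by simp
    qed
    ultimately show "uv \<in> {(\<lambda>_. 0, \<lambda>_. 0)}" using uv by simp
  qed
  show "{(\<lambda>_. 0, \<lambda>_. 0)} \<subseteq> dirac_kernel q I" using zero_in by simp
qed

lemma dplus_zero:
  assumes l: "l > 1/2"
  shows "dirac_kernel (l * (1 - l)) (discrete_plus_index l) = {(\<lambda>_. 0, \<lambda>_. 0)}"
proof (rule kernel_zero)
  have ge: "\<And>m. m \<in> discrete_plus_index l \<Longrightarrow> m \<ge> l"
    by (auto simp: discrete_plus_index_def)
  show "\<And>n. n \<in> discrete_plus_index l \<Longrightarrow> n - 1 \<notin> discrete_plus_index l \<Longrightarrow> n \<noteq> 0"
    using ge l by force
  show "\<And>n. n \<notin> discrete_plus_index l \<Longrightarrow> n - 1 \<in> discrete_plus_index l \<Longrightarrow> n - 1 \<noteq> 0"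
    using ge l by force
  fix n assume a: "n \<in> discrete_plus_index l" "n - 1 \<in> discrete_plus_index l"
  have n1: "n - 1 \<ge> l" using ge a by blast
  have "n * (n-1) \<ge> (l+1) * l"
    by (rule mult_mono) (use n1 l in auto)
  then have P: "n * (n-1) \<ge> l*l + l" by (simp add: algebra_simps)
  have e: "l*(1-l) + n*(n-1) = l - l*l + n*(n-1)" "l*(1-l) + 2*n*(n-1) = l - l*l + 2*(n*(n-1))"
    by (simp_all add: algebra_simps)
  show "l * (1 - l) + n*(n-1) \<ge> 0 \<and> l * (1 - l) + 2*n*(n-1) \<noteq> 0"
    unfolding e using P l zero_le_square[of l] by (intro conjI) linarith+
qed

lemma dminus_zero:
  assumes l: "l > 1/2"
  shows "dirac_kernel (l * (1 - l)) (discrete_minus_index l) = {(\<lambda>_. 0, \<lambda>_. 0)}"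
proof (rule kernel_zero)
  have ge: "\<And>m. m \<in> discrete_minus_index l \<Longrightarrow> m \<le> -l"
    by (auto simp: discrete_minus_index_def)
  show "\<And>n. n \<in> discrete_minus_index l \<Longrightarrow> n - 1 \<notin> discrete_minus_index l \<Longrightarrow> n \<noteq> 0"
    using ge l by force
  show "\<And>n. n \<notin> discrete_minus_index l \<Longrightarrow> n - 1 \<in> discrete_minus_index l \<Longrightarrow> n - 1 \<noteq> 0"
    using ge l by force
  fix n assume a: "n \<in> discrete_minus_index l" "n - 1 \<in> discrete_minus_index l"
  have n1: "-n \<ge> l" using ge a by force
  have "(-n) * (-(n-1)) \<ge> l * (l+1)"
    by (rule mult_mono) (use n1 l in auto)
  then have P: "n * (n-1) \<ge> l*l + l" by (simp add: algebra_simps)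
  have e: "l*(1-l) + n*(n-1) = l - l*l + n*(n-1)" "l*(1-l) + 2*n*(n-1) = l - l*l + 2*(n*(n-1))"
    by (simp_all add: algebra_simps)
  show "l * (1 - l) + n*(n-1) \<ge> 0 \<and> l * (1 - l) + 2*n*(n-1) \<noteq> 0"
    unfolding e using P l zero_le_square[of l] by (intro conjI) linarith+
qed

lemma pidx_shift: "n - 1 \<in> principal_index \<tau> \<longleftrightarrow> n \<in> principal_index \<tau>"
proof
  assume "n - 1 \<in> principal_index \<tau>"
  then obtain k :: int where "n - 1 = \<tau> + of_int k" by (auto simp: principal_index_def)
  then have "n = \<tau> + of_int (k+1)" by simp
  then show "n \<in> principal_index \<tau>" unfolding principal_index_def by blast
next
  assume "n \<in> principal_index \<tau>"
  then obtain k :: int where "n = \<tau> + of_int k" by (auto simp: principal_index_def)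
  then have "n - 1 = \<tau> + of_int (k-1)" by simp
  then show "n - 1 \<in> principal_index \<tau>" unfolding principal_index_def by blast
qed

lemma pidx_root:
  assumes n: "n \<in> principal_index \<tau>" and t: "0 \<le> \<tau>" "\<tau> \<le> 1" and q: "q \<ge> 1/4"
    and z: "q + 2*n*(n-1) = 0"
  shows "n = \<tau>"
proof -
  obtain k :: int where k: "n = \<tau> + of_int k" using n by (auto simp: principal_index_def)
  have "n * (n-1) < 0" using z q by linarith
  then have "0 < n \<and> n < 1" by (auto simp: mult_less_0_iff)
  then have "of_int k > (-1::real)" "of_int k < (1::real)" using k t by linarith+
  then have "k = 0" by linarith
  then show ?thesis using k by simp
qed

lemma arc_bounds:
  assumes q: "q \<ge> 1/4" and z: "q + 2*\<tau>*(\<tau>-1) = 0"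
  shows "(q, \<tau>) \<in> arcQ"
proof -
  have s: "1 / sqrt 8 = sqrt (1/8)" by (simp add: real_sqrt_divide)
  have sq: "(\<tau> - 1/2)^2 \<le> 1/8" using q z by (simp add: power2_eq_square algebra_simps)
  have "\<tau> - 1/2 \<le> sqrt (1/8)" by (rule real_le_rsqrt) (use sq in simp)
  moreover have "1/2 - \<tau> \<le> sqrt (1/8)" by (rule real_le_rsqrt) (use sq in \<open>simp add: power2_commute\<close>)
  ultimately show ?thesis using z by (auto simp: arcQ_def s)
qed


lemma fin_supp_summ:
  assumes "finite F" "\<And>m. m \<notin> F \<Longrightarrow> f m = 0"
  shows "f summable_on I"
proof -
  have "f summable_on (F \<inter> I)" using assms(1) by simp
  then show ?thesis
    by (subst summable_on_cong_neutral[where T="F \<inter> I" and g=f]) (use assms(2) in auto)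
qed

lemma kernE1:
  assumes K: "(u,v) \<in> dirac_kernel q I"
  shows "of_real n * u n + of_real (Hplus_coef q I (n-1)) * v (n-1) = 0"
proof -
  from K have D: "dirac_loc q I (u,v) = (\<lambda>_. 0, \<lambda>_. 0)"
    by (auto simp: dirac_kernel_def)
  show ?thesis
    using fun_cong[OF arg_cong[where f=fst, OF D], of n]
    by (simp add: dirac_loc_def H0_op_def Hplus_op_def neg_eq_iff_add_eq_0)
qed

lemma nn1: "(n::real) * (n - 1) \<ge> -1/4"
proof -
  have "0 \<le> (n - 1/2)^2" by simp
  then show ?thesis by (simp add: power2_eq_square algebra_simps)
qed

lemma principal_c3:
  assumes t: "0 \<le> \<tau>" "\<tau> \<le> 1" and q: "q \<ge> 1/4"
    and n: "n \<in> principal_index \<tau>" and ne: "n \<noteq> \<tau> \<or> (q, \<tau>) \<notin> arcQ"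
  shows "q + n*(n-1) \<ge> 0 \<and> q + 2*n*(n-1) \<noteq> 0"
proof
  show "q + n*(n-1) \<ge> 0" using nn1[of n] q by linarith
  show "q + 2*n*(n-1) \<noteq> 0"
  proof
    assume z: "q + 2*n*(n-1) = 0"
    then have "n = \<tau>" using pidx_root[OF n t q] by simp
    then show False using ne arc_bounds[OF q] z by auto
  qed
qed

lemma principal_not_arc:
  assumes t: "0 \<le> \<tau>" "\<tau> \<le> 1" and q: "q \<ge> 1/4" and na: "(q, \<tau>) \<notin> arcQ"
  shows "dirac_kernel q (principal_index \<tau>) = {(\<lambda>_. 0, \<lambda>_. 0)}"
  by (rule kernel_zero) (use pidx_shift principal_c3[OF t q _] na in auto)


lemma principal_arc:
  assumes t: "0 \<le> \<tau>" "\<tau> \<le> 1" and q: "q \<ge> 1/4" and a: "(q, \<tau>) \<in> arcQ"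
  shows "dirac_kernel q (principal_index \<tau>) =
     {(\<lambda>n. c * (complex_of_real (sqrt (1 - \<tau>)) * basis_vec \<tau> n),
       \<lambda>n. c * (- complex_of_real (sqrt \<tau>) * basis_vec (\<tau> - 1) n)) | c :: complex. True}"
    (is "?K = ?S")
proof -
  define I where "I = principal_index \<tau>"
  have z: "q + 2*\<tau>*(\<tau>-1) = 0" using a by (simp add: arcQ_def)
  have "\<tau> * (\<tau> - 1) < 0" using z q by linarith
  then have t01: "0 < \<tau>" "\<tau> < 1" by (auto simp: mult_less_0_iff)
  define st where "st = sqrt \<tau>"
  define sb where "sb = sqrt (1 - \<tau>)"
  have st2: "st * st = \<tau>" and sb2: "sb * sb = 1 - \<tau>" and stp: "st > 0" and sbp: "sb > 0"
    using t01 by (auto simp: st_def sb_def)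
  have tI: "\<tau> \<in> I" unfolding I_def principal_index_def by (rule CollectI, rule exI[of _ 0]) simp
  have t1I: "\<tau> - 1 \<in> I" unfolding I_def principal_index_def
    by (rule CollectI, rule exI[of _ "-1"]) simp
  have qq: "q + (\<tau> - 1) * \<tau> = \<tau> * (1 - \<tau>)" using z by (simp add: algebra_simps)
  have P: "Hplus_coef q I (\<tau> - 1) = st * sb"
    using tI t1I qq by (simp add: Hplus_coef_def st_def sb_def real_sqrt_mult)
  have M: "Hminus_coef q I \<tau> = st * sb"
    using tI t1I qq by (simp add: Hminus_coef_def st_def sb_def real_sqrt_mult mult.commute)
  show ?thesis
  proof
    show "?K \<subseteq> ?S"
    proof
      fix w assume wK: "w \<in> ?K"
      obtain u v where w: "w = (u, v)" by fastforce
      have K: "(u,v) \<in> dirac_kernel q I" using wK w I_def by simp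
      have pn: "u n = 0 \<and> v (n-1) = 0" if ne: "n \<noteq> \<tau>" for n
      proof (rule pt[OF K])
        show "n \<in> I \<Longrightarrow> n - 1 \<notin> I \<Longrightarrow> n \<noteq> 0" using pidx_shift unfolding I_def by blast
        show "n \<notin> I \<Longrightarrow> n - 1 \<in> I \<Longrightarrow> n - 1 \<noteq> 0" using pidx_shift unfolding I_def by blast
        show "n \<in> I \<Longrightarrow> n - 1 \<in> I \<Longrightarrow> q + n*(n-1) \<ge> 0 \<and> q + 2*n*(n-1) \<noteq> 0"
          using principal_c3[OF t q _ ] ne unfolding I_def by blast
      qed
      have E1: "of_real \<tau> * u \<tau> + of_real (st* sb) * v (\<tau> - 1) = 0"
        using kernE1[OF K, of \<tau>] P by simp
      define c where "c = u \<tau> / of_real sb"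
      have hu: "u \<tau> = c * of_real sb" using sbp by (simp add: c_def)
      have tt: "(of_real \<tau> :: complex) = of_real st * of_real st" using st2 by (metis of_real_mult)
      have "of_real sb * (of_real st * (of_real st * c + v (\<tau> - 1))) =
            of_real \<tau> * u \<tau> + of_real (st* sb) * v (\<tau> - 1)"
        by (simp add: hu tt algebra_simps)
      then have "of_real sb * (of_real st * (of_real st * c + v (\<tau> - 1))) = (0::complex)"
        using E1 by simp
      then have "of_real st * c + v (\<tau> - 1) = 0" using sbp stp by simp
      then have hv: "v (\<tau> - 1) = c * (- of_real st)" by (simp add: algebra_simps eq_neg_iff_add_eq_0)
      have "u = (\<lambda>n. c * (complex_of_real (sqrt (1 - \<tau>)) * basis_vec \<tau> n))"
      proof
        fix n show "u n = c * (complex_of_real (sqrt (1 - \<tau>)) * basis_vec \<tau> n)"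
          using pn[of n] hu by (cases "n = \<tau>") (auto simp: basis_vec_def sb_def)
      qed
      moreover have "v = (\<lambda>n. c * (- complex_of_real (sqrt \<tau>) * basis_vec (\<tau> - 1) n))"
      proof
        fix n show "v n = c * (- complex_of_real (sqrt \<tau>) * basis_vec (\<tau> - 1) n)"
          using pn[of "n+1"] hv by (cases "n = \<tau> - 1") (auto simp: basis_vec_def st_def)
      qed
      ultimately show "w \<in> ?S" using w by blast
    qed
    show "?S \<subseteq> ?K"
    proof
      fix w assume "w \<in> ?S"
      then obtain c where w: "w = (\<lambda>n. c * (complex_of_real sb * basis_vec \<tau> n),
       \<lambda>n. c * (- complex_of_real st * basis_vec (\<tau> - 1) n))" by (auto simp: sb_def st_def)
      have L1: "(\<lambda>n. c * (complex_of_real sb * basis_vec \<tau> n)) \<in> ladder_space I"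
        unfolding ladder_space_def using tI
        by (auto simp: basis_vec_def split: if_splits intro!: fin_supp_summ[of "{\<tau>}"])
      have L2: "(\<lambda>n. c * (- complex_of_real st * basis_vec (\<tau> - 1) n)) \<in> ladder_space I"
        unfolding ladder_space_def using t1I
        by (auto simp: basis_vec_def split: if_splits intro!: fin_supp_summ[of "{\<tau> - 1}"])
      have tt: "(of_real \<tau> :: complex) = of_real st * of_real st" using st2 by (metis of_real_mult)
      have D1: "of_real n * (c * (of_real sb * basis_vec \<tau> n)) + of_real (Hplus_coef q I (n-1))
         * (c * (- of_real st * basis_vec (\<tau> - 1) (n-1))) = 0" for n
      proof (cases "n = \<tau>")
        case True
        then show ?thesis using P by (simp add: basis_vec_def tt algebra_simps)
      next
        case False
        then show ?thesis by (simp add: basis_vec_def)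
      qed
      have D2: "of_real (Hminus_coef q I (n+1)) * (c * (of_real sb * basis_vec \<tau> (n+1)))
         - of_real n * (c * (- of_real st * basis_vec (\<tau> - 1) n)) = 0" for n
      proof (cases "n = \<tau> - 1")
        case True
        have "of_real (st* sb) * (c * of_real sb) + of_real (\<tau> - 1) * (c * of_real st)
            = of_real (st*(sb* sb) + (\<tau>-1) * st) * (c::complex)"
          by (simp add: algebra_simps)
        also have "st*(sb* sb) + (\<tau>-1) * st = 0" unfolding sb2 by (simp add: algebra_simps)
        finally show ?thesis using True M by (simp add: basis_vec_def)
      next
        case False
        then have "n + 1 \<noteq> \<tau>" by auto
        then show ?thesis using False by (simp add: basis_vec_def)
      qed
      have "dirac_loc q I w = (\<lambda>_. 0, \<lambda>_. 0)"
        unfolding w dirac_loc_def H0_op_def Hplus_op_def Hminus_op_def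
        apply (simp only: fst_conv snd_conv prod.inject)
        apply (intro conjI ext)
        subgoal for n using D1[of n] by (simp only: neg_equal_0_iff_equal)
        subgoal for n using D2[of n] by (simp only: neg_equal_0_iff_equal)
        done
      then show "w \<in> ?K" using L1 L2 w unfolding I_def dirac_kernel_def by simp
    qed
  qed
qed


lemma arc_t01:
  assumes q: "q \<ge> 1/4" and a: "(q, \<tau>) \<in> arcQ"
  shows "0 < \<tau> \<and> \<tau> < 1"
proof -
  have z: "q + 2*\<tau>*(\<tau>-1) = 0" using a by (simp add: arcQ_def)
  have "\<tau> * (\<tau> - 1) < 0" using z q by linarith
  then show ?thesis by (auto simp: mult_less_0_iff)
qed

lemma s_nonzero:
  assumes "\<tau> < 1"
  shows "(\<lambda>n. complex_of_real (sqrt (1 - \<tau>)) * basis_vec \<tau> n,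
          \<lambda>n. - complex_of_real (sqrt \<tau>) * basis_vec (\<tau> - 1) n) \<noteq> (\<lambda>_. 0, \<lambda>_. 0)"
proof
  assume "(\<lambda>n. complex_of_real (sqrt (1 - \<tau>)) * basis_vec \<tau> n,
          \<lambda>n. - complex_of_real (sqrt \<tau>) * basis_vec (\<tau> - 1) n) = (\<lambda>_. 0, \<lambda>_. 0)"
  then have "complex_of_real (sqrt (1 - \<tau>)) * basis_vec \<tau> \<tau> = 0"
    by (metis (no_types, lifting) fst_conv)
  then show False using assms by (simp add: basis_vec_def)
qed

theorem mainTheorem13:
  shows "(\<forall>l::real. l > 1/2 \<longrightarrow>
            dirac_kernel (l * (1 - l)) (discrete_plus_index l) = {(\<lambda>_. 0, \<lambda>_. 0)} \<and>
            dirac_kernel (l * (1 - l)) (discrete_minus_index l) = {(\<lambda>_. 0, \<lambda>_. 0)})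
       \<and> (\<forall>q \<tau> :: real. q \<ge> 1/4 \<longrightarrow> 0 \<le> \<tau> \<longrightarrow> \<tau> \<le> 1 \<longrightarrow>
            (dirac_kernel q (principal_index \<tau>) \<noteq> {(\<lambda>_. 0, \<lambda>_. 0)} \<longleftrightarrow> (q, \<tau>) \<in> arcQ))
       \<and> (\<forall>q \<tau> :: real. q \<ge> 1/4 \<longrightarrow> 0 \<le> \<tau> \<longrightarrow> \<tau> \<le> 1 \<longrightarrow> (q, \<tau>) \<in> arcQ \<longrightarrow>
            (let s = (\<lambda>n. complex_of_real (sqrt (1 - \<tau>)) * basis_vec \<tau> n,
                      \<lambda>n. - complex_of_real (sqrt \<tau>) * basis_vec (\<tau> - 1) n)
             in s \<noteq> (\<lambda>_. 0, \<lambda>_. 0) \<and>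
                dirac_kernel q (principal_index \<tau>) =
                  {(\<lambda>n. c * fst s n, \<lambda>n. c * snd s n) | c :: complex. True}))"
  
proof (intro conjI allI impI)
  fix l :: real assume "l > 1/2"
  then show "dirac_kernel (l * (1 - l)) (discrete_plus_index l) = {(\<lambda>_. 0, \<lambda>_. 0)}"
    "dirac_kernel (l * (1 - l)) (discrete_minus_index l) = {(\<lambda>_. 0, \<lambda>_. 0)}"
    using dplus_zero dminus_zero by auto
next
  fix q \<tau> :: real assume q: "q \<ge> 1/4" and t: "0 \<le> \<tau>" "\<tau> \<le> 1"
  show "dirac_kernel q (principal_index \<tau>) \<noteq> {(\<lambda>_. 0, \<lambda>_. 0)} \<longleftrightarrow> (q, \<tau>) \<in> arcQ"
  proof
    assume "dirac_kernel q (principal_index \<tau>) \<noteq> {(\<lambda>_. 0, \<lambda>_. 0)}"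
    then show "(q, \<tau>) \<in> arcQ" using principal_not_arc[OF t q] by blast
  next
    assume a: "(q, \<tau>) \<in> arcQ"
    have "(\<lambda>n. 1 * (complex_of_real (sqrt (1 - \<tau>)) * basis_vec \<tau> n),
           \<lambda>n. 1 * (- complex_of_real (sqrt \<tau>) * basis_vec (\<tau> - 1) n)) \<in> dirac_kernel q (principal_index \<tau>)"
      unfolding principal_arc[OF t q a] by blast
    moreover have "(\<lambda>n. 1 * (complex_of_real (sqrt (1 - \<tau>)) * basis_vec \<tau> n),
           \<lambda>n. 1 * (- complex_of_real (sqrt \<tau>) * basis_vec (\<tau> - 1) n)) \<noteq> (\<lambda>_. 0, \<lambda>_. 0)"
      using s_nonzero arc_t01[OF q a] by simp
    ultimately show "dirac_kernel q (principal_index \<tau>) \<noteq> {(\<lambda>_. 0, \<lambda>_. 0)}" by blast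
  qed
next
  fix q \<tau> :: real assume q: "q \<ge> 1/4" and t: "0 \<le> \<tau>" "\<tau> \<le> 1" and a: "(q, \<tau>) \<in> arcQ"
  show "let s = (\<lambda>n. complex_of_real (sqrt (1 - \<tau>)) * basis_vec \<tau> n,
                      \<lambda>n. - complex_of_real (sqrt \<tau>) * basis_vec (\<tau> - 1) n)
             in s \<noteq> (\<lambda>_. 0, \<lambda>_. 0) \<and>
                dirac_kernel q (principal_index \<tau>) =
                  {(\<lambda>n. c * fst s n, \<lambda>n. c * snd s n) | c :: complex. True}"
    unfolding Let_def fst_conv snd_conv
    using s_nonzero arc_t01[OF q a] principal_arc[OF t q a] by simp
qed

end
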